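(* Let $n\ge w\ge t\ge 1$ and $q,q'\ge 1$ be integers. Let $S\subset Q_{q*}^n$ be an $H(n,q,w,t)$ design and let $R\subset Q_{q'*}^w$ be an $H(w,q',w,t)$ design (i.e. an MDS code of length $w$ over $Q_{q'}$ in which every word of weight $t$ in $Q_{q'*}^w$ is extended by exactly one codeword). For each pair consisting of a codeword $a\in S$, whose non-$*$ entries in increasing order of position are $a^1,\dots,a^w$, and a codeword $(b_1,\dots,b_w)\in R$, form the word in $(Q_q\times Q_{q'})_*^n$ which has $*$ exactly where $a$ has $*$, and whose $j$-th non-$*$ entry (in increasing order of position) is the pair $(a^j,b_j)$, $j=1,\dots,w$. Identifying $Q_q\times Q_{q'}$ with $Q_{qq'}$, let $T\subset Q_{qq'*}^n$ be the set of all such words. Then $T$ is an $H(n,qq',w,t)$ design.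
   Context: For an integer $q\ge1$, $Q_q=\{0,1,\dots,q-1\}$ and $Q_{q*}=Q_q\cup\{*\}$ (for any finite alphabet $A$, $A_*=A\cup\{*\}$). The weight of a word $u\in Q_{q*}^n$ is $n$ minus the number of $*$ symbols in $u$. For $u,v\in Q_{q*}^n$ we say $u$ extends $v$ if $u_i=v_i$ for every position $i$ with $v_i\neq *$ (equivalently, viewing $u$ as the face $F(u)=\{x\in Q_q^n: x_i=u_i \text{ whenever } u_i\ne *\}$ of the hypercube $Q_q^n$, $F(u)\subseteq F(v)$). An $H(n,q,w,t)$ design is a set $S$ of words of weight $w$ in $Q_{q*}^n$ such that every word of weight $t$ in $Q_{q*}^n$ is extended by exactly one element of $S$. *)

theory Defs
  imports Main
begin

text \<open>Words in A_*^n are lists of length n over 'a option; None plays the role of *.\<close>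

definition words :: "'a set \<Rightarrow> nat \<Rightarrow> 'a option list set" where
  "words A n = {u. length u = n \<and> (\<forall>x\<in>set u. x = None \<or> the x \<in> A)}"

definition weight :: "'a option list \<Rightarrow> nat" where
  "weight u = length u - card {i. i < length u \<and> u ! i = None}"

definition extends :: "'a option list \<Rightarrow> 'a option list \<Rightarrow> bool" where
  "extends u v \<longleftrightarrow> length u = length v \<and> (\<forall>i<length v. v ! i \<noteq> None \<longrightarrow> u ! i = v ! i)"

text \<open>H(n,A,w,t) design over a general alphabet A; Q_q is {0..<q}.\<close>
definition H_design :: "nat \<Rightarrow> 'a set \<Rightarrow> nat \<Rightarrow> nat \<Rightarrow> 'a option list set \<Rightarrow> bool" where
  "H_design n A w t S \<longleftrightarrow>
     S \<subseteq> {u \<in> words A n. weight u = w} \<and>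
     (\<forall>v \<in> words A n. weight v = t \<longrightarrow> (\<exists>!u. u \<in> S \<and> extends u v))"

fun merge :: "'a option list \<Rightarrow> 'b list \<Rightarrow> ('a \<times> 'b) option list" where
  "merge [] bs = []"
| "merge (None # as) bs = None # merge as bs"
| "merge (Some x # as) (y # bs) = Some (x, y) # merge as bs"
| "merge (Some x # as) [] = None # merge as []"

text \<open>Identification of Q_q \<times> Q_q' with Q_{qq'}: (x,y) \<mapsto> x*q' + y.\<close>
definition pair_code :: "nat \<Rightarrow> nat \<times> nat \<Rightarrow> nat" where
  "pair_code q' p = fst p * q' + snd p"

definition product_design :: "nat \<Rightarrow> nat option list set \<Rightarrow> nat option list set \<Rightarrow> nat option list set" where
  "product_design q' S R =
     {map (map_option (pair_code q')) (merge a (map the b)) | a b. a \<in> S \<and> b \<in> R}"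

end

theory Submission
  imports Defs
begin

abbreviation cnt :: "'a option list \<Rightarrow> nat" where
  "cnt l \<equiv> length (filter (\<lambda>x. x \<noteq> None) l)"

fun extr :: "'a option list \<Rightarrow> 'b list \<Rightarrow> 'b list" where
  "extr (None # xs) (y # vs) = extr xs vs"
| "extr (Some _ # xs) (y # vs) = y # extr xs vs"
| "extr _ _ = []"

lemma weight_eq: "weight u = cnt u"
proof -
  have "card {i. i < length u \<and> u ! i = None} = length (filter (\<lambda>x. x = None) u)"
    by (simp add: length_filter_conv_card)
  moreover have "length (filter (\<lambda>x. x \<noteq> None) u) + length (filter (\<lambda>x. \<not> x \<noteq> None) u) = length u"
    by (rule sum_length_filter_compl)
  ultimately show ?thesis unfolding weight_def by simp
qed

lemma extends_Nil1[simp]: "extends [] v \<longleftrightarrow> v = []"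
  by (auto simp: extends_def)
lemma extends_Nil2[simp]: "extends u [] \<longleftrightarrow> u = []"
  by (auto simp: extends_def)
lemma extends_Cons[simp]: "extends (x # u) (y # v) \<longleftrightarrow> (y \<noteq> None \<longrightarrow> x = y) \<and> extends u v"
  unfolding extends_def
  by (auto simp: nth_Cons less_Suc_eq_0_disj split: nat.splits)

lemma length_merge[simp]: "length (merge a bs) = length a"
  by (induction a bs rule: merge.induct) auto

lemma cnt_merge: "length bs \<ge> cnt a \<Longrightarrow> cnt (merge a bs) = cnt a"
  by (induction a bs rule: merge.induct) auto

lemma set_merge: "z \<in> set (merge a bs) \<Longrightarrow> z = None \<or> (\<exists>x y. z = Some (x, y) \<and> Some x \<in> set a \<and> y \<in> set bs)"
  by (induction a bs rule: merge.induct) auto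

lemma set_extr: "set (extr a l) \<subseteq> set l"
  by (induction a l rule: extr.induct) auto

lemma length_extr: "length l = length a \<Longrightarrow> length (extr a l) = cnt a"
  by (induction a l rule: extr.induct) auto

lemma cnt_extr: "extends a (map (map_option f) v) \<Longrightarrow> cnt (extr a (map (map_option g) v)) = cnt v"
proof (induction a arbitrary: v)
  case Nil then show ?case by simp
next
  case (Cons x xs)
  then show ?case by (cases v; cases x) auto
qed

lemma pc_iff: "y < (q'::nat) \<Longrightarrow> (pair_code q' (x, y) = k) \<longleftrightarrow> (x = k div q' \<and> y = k mod q')"
  unfolding pair_code_def by auto

lemma main:
  fixes q' :: nat
  assumes "length bs = cnt a" "\<forall>y\<in>set bs. y < q'"
  shows "extends (map (map_option (pair_code q')) (merge a bs)) v \<longleftrightarrow>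
    extends a (map (map_option (\<lambda>c. c div q')) v) \<and>
    extends (map Some bs) (extr a (map (map_option (\<lambda>c. c mod q')) v))"
  using assms
proof (induction a arbitrary: bs v)
  case Nil then show ?case by (cases v) auto
next
  case (Cons x xs)
  show ?case
  proof (cases x)
    case None
    then show ?thesis using Cons by (cases v) auto
  next
    case (Some x')
    then obtain y bs' where bs: "bs = y # bs'" using Cons.prems by (cases bs) auto
    have y: "y < q'" using Cons.prems bs by auto
    show ?thesis
    proof (cases v)
      case Nil then show ?thesis using Some bs by simp
    next
      case (Cons c v')
      have IH: "extends (map (map_option (pair_code q')) (merge xs bs')) v' \<longleftrightarrow>
        extends xs (map (map_option (\<lambda>c. c div q')) v') \<and>
        extends (map Some bs') (extr xs (map (map_option (\<lambda>c. c mod q')) v'))"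
        using Cons.IH[of bs' v'] Cons.prems bs Some by auto
      show ?thesis using Some bs Cons IH pc_iff[OF y, of x'] by (cases c) auto
    qed
  qed
qed


lemma all_some:
  assumes "weight b = length b"
  shows "None \<notin> set b"
proof
  assume "None \<in> set b"
  then have "length (filter (\<lambda>x. x \<noteq> None) b) < length b"
    by (intro length_filter_less) auto
  then show False using assms by (simp add: weight_eq)
qed

lemma map_some_the: "None \<notin> set b \<Longrightarrow> map Some (map the b) = b"
  by (induction b) auto

lemma pc_bound: "x < q \<Longrightarrow> y < (q'::nat) \<Longrightarrow> pair_code q' (x, y) < q * q'"
proof -
  assume "x < q" "y < q'"
  then have "x * q' + y < x * q' + q'" by simp
  also have "\<dots> = (x + 1) * q'" by simp
  also have "\<dots> \<le> q * q'" using \<open>x < q\<close> by (intro mult_right_mono) auto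
  finally show ?thesis by (simp add: pair_code_def)
qed

lemma cnt_map: "cnt (map (map_option f) v) = cnt v"
  by (induction v) auto

theorem proposition1:
  fixes n w t q q' :: nat and S R :: "nat option list set"
  assumes "n \<ge> w" and "w \<ge> t" and "t \<ge> 1" and "q \<ge> 1" and "q' \<ge> 1"
    and "H_design n {0..<q} w t S"
    and "H_design w {0..<q'} w t R"
  shows "H_design n {0..<q * q'} w t (product_design q' S R)"
proof -
  have q'pos: "q' > 0" using assms by simp
  have Ssub: "S \<subseteq> {u \<in> words {0..<q} n. weight u = w}"
    and Suni: "\<And>v. v \<in> words {0..<q} n \<Longrightarrow> weight v = t \<Longrightarrow> \<exists>!u. u \<in> S \<and> extends u v"
    using assms(6) unfolding H_design_def by auto
  have Rsub: "R \<subseteq> {u \<in> words {0..<q'} w. weight u = w}"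
    and Runi: "\<And>v. v \<in> words {0..<q'} w \<Longrightarrow> weight v = t \<Longrightarrow> \<exists>!u. u \<in> R \<and> extends u v"
    using assms(7) unfolding H_design_def by auto
  have Rprops: "None \<notin> set b \<and> length (map the b) = w \<and> (\<forall>y\<in>set (map the b). y < q')
      \<and> map Some (map the b) = b" if "b \<in> R" for b
  proof -
    have b: "b \<in> words {0..<q'} w" "weight b = w" using that Rsub by auto
    then have len: "length b = w" by (simp add: words_def)
    have ns: "None \<notin> set b" using b len by (intro all_some) simp
    have "\<forall>y\<in>set (map the b). y < q'" using b(1) ns unfolding words_def by auto
    then show ?thesis using ns len map_some_the[OF ns] by simp
  qed
  have Sprops: "length a = n \<and> cnt a = w \<and> (\<forall>x\<in>set a. x = None \<or> the x < q)" if "a \<in> S" for a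
    using that Ssub by (auto simp: words_def weight_eq)
  let ?pc = "map_option (pair_code q')"
  let ?dv = "map (map_option (\<lambda>c. c div q'))"
  let ?md = "map (map_option (\<lambda>c. c mod q'))"
  have key: "extends (map ?pc (merge a (map the b))) v \<longleftrightarrow>
      extends a (?dv v) \<and> extends b (extr a (?md v))" if "a \<in> S" "b \<in> R" for a b v
    using main[of "map the b" a q' v] Rprops[OF that(2)] Sprops[OF that(1)] by simp
  show ?thesis unfolding H_design_def
  proof (intro conjI ballI impI)
    show "product_design q' S R \<subseteq> {u \<in> words {0..<q * q'} n. weight u = w}"
    proof
      fix u assume "u \<in> product_design q' S R"
      then obtain a b where u: "u = map ?pc (merge a (map the b))" and ab: "a \<in> S" "b \<in> R"
        unfolding product_design_def by auto
      note A = Sprops[OF ab(1)] and B = Rprops[OF ab(2)]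
      have "length u = n" using u A by simp
      moreover have "\<forall>z\<in>set u. z = None \<or> the z \<in> {0..<q * q'}"
      proof
        fix z assume "z \<in> set u"
        then obtain z0 where z0: "z0 \<in> set (merge a (map the b))" "z = ?pc z0" using u by auto
        from set_merge[OF z0(1)] show "z = None \<or> the z \<in> {0..<q * q'}"
        proof
          assume "z0 = None" then show ?thesis using z0 by simp
        next
          assume "\<exists>x y. z0 = Some (x, y) \<and> Some x \<in> set a \<and> y \<in> set (map the b)"
          then obtain x y where xy: "z0 = Some (x, y)" "Some x \<in> set a" "y \<in> set (map the b)" by blast
          have "x < q" using A xy(2) by force
          moreover have "y < q'" using B xy(3) by blast
          ultimately show ?thesis using z0 xy pc_bound by simp
        qed
      qed
      moreover have "weight u = w"
        unfolding weight_eq u cnt_map[of "pair_code q'"] using A B cnt_merge[of a "map the b"] by simp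
      ultimately show "u \<in> {u \<in> words {0..<q * q'} n. weight u = w}" by (simp add: words_def)
    qed
  next
    fix v assume v: "v \<in> words {0..<q * q'} n" "weight v = t"
    have vd: "?dv v \<in> words {0..<q} n"
    proof -
      have "\<forall>x\<in>set (?dv v). x = None \<or> the x \<in> {0..<q}"
      proof
        fix x assume "x \<in> set (?dv v)"
        then obtain y where y: "y \<in> set v" "x = map_option (\<lambda>c. c div q') y" by auto
        show "x = None \<or> the x \<in> {0..<q}"
        proof (cases y)
          case None then show ?thesis using y by simp
        next
          case (Some c)
          then have "c < q * q'" using y(1) v(1) unfolding words_def by force
          then have "c div q' < q" by (rule less_mult_imp_div_less)
          then show ?thesis using y Some by simp
        qed
      qed
      then show ?thesis using v(1) unfolding words_def by simp
    qed
    have vdw: "weight (?dv v) = t" using v(2) unfolding weight_eq cnt_map[of "\<lambda>c. c div q'"] .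
    from Suni[OF vd vdw] obtain a where a0: "a \<in> S \<and> extends a (?dv v)"
      and auni0: "\<forall>a'. a' \<in> S \<and> extends a' (?dv v) \<longrightarrow> a' = a" by (rule ex1E)
    have a: "a \<in> S" "extends a (?dv v)" using a0 by auto
    have auni: "\<And>a'. a' \<in> S \<Longrightarrow> extends a' (?dv v) \<Longrightarrow> a' = a" using auni0 by simp
    note A = Sprops[OF a(1)]
    have lenv: "length v = n" using v(1) by (simp add: words_def)
    let ?e = "extr a (?md v)"
    have e: "?e \<in> words {0..<q'} w"
    proof -
      have "length ?e = w" using A lenv by (simp add: length_extr)
      moreover have "\<forall>x\<in>set ?e. x = None \<or> the x \<in> {0..<q'}"
      proof
        fix x assume "x \<in> set ?e"
        then have "x \<in> set (?md v)" using set_extr by fast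
        then obtain y where y: "x = map_option (\<lambda>c. c mod q') y" by auto
        then show "x = None \<or> the x \<in> {0..<q'}" using q'pos by (cases y) auto
      qed
      ultimately show ?thesis by (simp add: words_def)
    qed
    have ew: "weight ?e = t" using cnt_extr[OF a(2)] v(2) by (simp add: weight_eq)
    from Runi[OF e ew] obtain b where b0: "b \<in> R \<and> extends b ?e"
      and buni0: "\<forall>b'. b' \<in> R \<and> extends b' ?e \<longrightarrow> b' = b" by (rule ex1E)
    have b: "b \<in> R" "extends b ?e" using b0 by auto
    have buni: "\<And>b'. b' \<in> R \<Longrightarrow> extends b' ?e \<Longrightarrow> b' = b" using buni0 by simp
    let ?u = "map ?pc (merge a (map the b))"
    show "\<exists>!u. u \<in> product_design q' S R \<and> extends u v"
    proof (rule ex1I[of _ ?u])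
      show "?u \<in> product_design q' S R \<and> extends ?u v"
      proof
        show "?u \<in> product_design q' S R" unfolding product_design_def using a(1) b(1) by blast
        show "extends ?u v" using a(2) b(2) key[OF a(1) b(1), of v] by simp
      qed
    next
      fix u' assume u': "u' \<in> product_design q' S R \<and> extends u' v"
      then obtain a' b' where u'': "u' = map ?pc (merge a' (map the b'))" and ab: "a' \<in> S" "b' \<in> R"
        unfolding product_design_def by auto
      have "extends a' (?dv v) \<and> extends b' (extr a' (?md v))"
        using key[OF ab, of v] u' u'' by simp
      then have "a' = a" using auni ab(1) by simp
      then have "b' = b" using buni ab(2) \<open>extends a' (?dv v) \<and> extends b' (extr a' (?md v))\<close> by simp
      show "u' = ?u" using u'' \<open>a' = a\<close> \<open>b' = b\<close> by simp
    qed
  qed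
qed

end
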